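(* Assume $\gamma^{(l)}_i>0$ for all $l,i$. Fix $m\ge1$, a neuron $j$ of layer $m$, a label $q$, and set $u=s^{(m)}_{j,q}$. Then for every $0\le l\le m$, neuron $i$ of layer $l$, and $p,k\in\{+,-\}$: (1) $\dfrac{\partial a^{(m,p\oplus q)}_{\mathrm{stop},j}}{\partial a^{(l,k)}_{\mathrm{stop},i}}=\Gamma_u(s^{(l)}_{i,p\oplus k})$, where the derivative is taken of the affine map sending the layer-$l$ pair $(a^{(l,+)}_{\mathrm{stop}},a^{(l,-)}_{\mathrm{stop}})$ (treated as free variables) to the layer-$m$ pair via the Stopping Decomposition recursion with all gate factors $\mathbf 1[z^{(l')}_{h}>0]$, $l<l'\le m$, frozen at their values at $x$; (2) $J_{ji}=\xi_{q,+}\bigl(\Gamma_u(s^{(l)}_{i,+})-\Gamma_u(s^{(l)}_{i,-})\bigr)$, where $J=D^{(m)}W^{(m)}D^{(m-1)}W^{(m-1)}\cdots D^{(l+1)}W^{(l+1)}$ (identity if $l=m$) with $D^{(l')}=\mathrm{diag}(\mathbf 1[z^{(l')}>0])$, i.e. $J_{ji}=\partial a^{(m)}_j/\partial a^{(l)}_i$ with the convention $\mathrm{ReLU}'(0)=0$.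
   Context: ReLU network: $a^{(0)}=x$, $z^{(l)}=b^{(l)}+W^{(l)}a^{(l-1)}$, $a^{(l)}=\mathrm{ReLU}(z^{(l)})$; $W^{(l,\pm)}=(W^{(l)})^\pm$, $b^{(l,\pm)}=(b^{(l)})^\pm$ entrywise, $u^\pm=\max(\pm u,0)$. Stopping Decomposition: $a^{(0,\pm)}_{\mathrm{stop},k}=x^\pm_k$, $z^{(l,+)}_i=b^{(l,+)}_i+\sum_hW^{(l,+)}_{ih}a^{(l-1,+)}_{\mathrm{stop},h}+\sum_hW^{(l,-)}_{ih}a^{(l-1,-)}_{\mathrm{stop},h}$, $z^{(l,-)}_i=b^{(l,-)}_i+\sum_hW^{(l,+)}_{ih}a^{(l-1,-)}_{\mathrm{stop},h}+\sum_hW^{(l,-)}_{ih}a^{(l-1,+)}_{\mathrm{stop},h}$, $a^{(l,\pm)}_{\mathrm{stop},i}=\mathbf 1[z^{(l)}_i>0]\,z^{(l,\pm)}_i$. Labels $p,q,r,k\in\{+,-\}$; $p\oplus q=+$ if $p=q$, else $-$; $\xi_{p,q}=1$ if $p=q$, else $-1$. Stopping-Game chain: states $s^{(l)}_{i,r}$ ($0\le l\le L$) plus a cemetery $\perp$. From $s^{(l)}_{i,r}$ with $l\ge1$: if $z^{(l)}_i\le0$ go to $\perp$ (discount factor irrelevant); if $z^{(l)}_i>0$ go to $s^{(l-1)}_{h,r'}$ with probability $W^{(l,r\oplus r')}_{ih}/\gamma^{(l)}_i$, where $\gamma^{(l)}_i=\sum_h|W^{(l)}_{ih}|$, with discount factor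 $\gamma^{(l)}_i$. States at layer $0$ and $\perp$ are absorbing/terminal. For a trajectory $\tau=(\tau_0=u,\tau_1,\dots)$ define the cumulative discount $d_0=1$, $d_t=\prod_{m'<t}\gamma(\tau_{m'})$ where $\gamma(\tau_{m'})$ is the discount factor of the continuation taken at $\tau_{m'}$. The discounted occupation measure is $\Gamma_u(v)=\mathbb{E}[\sum_t d_t\mathbf 1\{\tau_t=v\}]$. *)

theory Defs
  imports Complex_Main
begin

text \<open>ReLU network with L layers, widths n l (layer 0 = input of width n 0),
  weights W l i h (layer l, neuron i, neuron h of layer l-1), biases b l i, input x.
  Signs/labels are encoded as bool: True = +, False = -.\<close>

definition posp :: "real \<Rightarrow> real" where "posp u = max u 0"
definition negp :: "real \<Rightarrow> real" where "negp u = max (- u) 0"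

definition sxor :: "bool \<Rightarrow> bool \<Rightarrow> bool" where "sxor p q = (p = q)"
definition xi :: "bool \<Rightarrow> bool \<Rightarrow> real" where "xi p q = (if p = q then 1 else -1)"

definition Wpm :: "(nat \<Rightarrow> nat \<Rightarrow> nat \<Rightarrow> real) \<Rightarrow> nat \<Rightarrow> bool \<Rightarrow> nat \<Rightarrow> nat \<Rightarrow> real" where
  "Wpm W l s i h = (if s then posp (W l i h) else negp (W l i h))"
definition Bpm :: "(nat \<Rightarrow> nat \<Rightarrow> real) \<Rightarrow> nat \<Rightarrow> bool \<Rightarrow> nat \<Rightarrow> real" where
  "Bpm b l s i = (if s then posp (b l i) else negp (b l i))"

fun fwd_a :: "(nat \<Rightarrow> nat) \<Rightarrow> (nat \<Rightarrow> nat \<Rightarrow> nat \<Rightarrow> real) \<Rightarrow> (nat \<Rightarrow> nat \<Rightarrow> real) \<Rightarrow> (nat \<Rightarrow> real)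
    \<Rightarrow> nat \<Rightarrow> nat \<Rightarrow> real" where
  "fwd_a n W b x 0 i = x i"
| "fwd_a n W b x (Suc l) i = max (b (Suc l) i + (\<Sum>h<n l. W (Suc l) i h * fwd_a n W b x l h)) 0"

definition zpre :: "(nat \<Rightarrow> nat) \<Rightarrow> (nat \<Rightarrow> nat \<Rightarrow> nat \<Rightarrow> real) \<Rightarrow> (nat \<Rightarrow> nat \<Rightarrow> real) \<Rightarrow> (nat \<Rightarrow> real)
    \<Rightarrow> nat \<Rightarrow> nat \<Rightarrow> real" where
  "zpre n W b x l i = b l i + (\<Sum>h<n (l - 1). W l i h * fwd_a n W b x (l - 1) h)"

fun astop :: "(nat \<Rightarrow> nat) \<Rightarrow> (nat \<Rightarrow> nat \<Rightarrow> nat \<Rightarrow> real) \<Rightarrow> (nat \<Rightarrow> nat \<Rightarrow> real) \<Rightarrow> (nat \<Rightarrow> real)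
    \<Rightarrow> nat \<Rightarrow> bool \<Rightarrow> nat \<Rightarrow> real" where
  "astop n W b x 0 s k = (if s then posp (x k) else negp (x k))"
| "astop n W b x (Suc l) s i =
     (if zpre n W b x (Suc l) i > 0 then
        Bpm b (Suc l) s i + (\<Sum>h<n l. Wpm W (Suc l) True i h * astop n W b x l s h
                                    + Wpm W (Suc l) False i h * astop n W b x l (\<not> s) h)
      else 0)"

text \<open>The affine map: layer-l pair A (free variables) propagated d layers up through the
  Stopping Decomposition recursion, with the gates frozen at their values at x.
  fprop n W b x l A d s i is the (s)-component of neuron i at layer l + d.\<close>
fun fprop :: "(nat \<Rightarrow> nat) \<Rightarrow> (nat \<Rightarrow> nat \<Rightarrow> nat \<Rightarrow> real) \<Rightarrow> (nat \<Rightarrow> nat \<Rightarrow> real) \<Rightarrow> (nat \<Rightarrow> real)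
    \<Rightarrow> nat \<Rightarrow> (bool \<Rightarrow> nat \<Rightarrow> real) \<Rightarrow> nat \<Rightarrow> bool \<Rightarrow> nat \<Rightarrow> real" where
  "fprop n W b x l A 0 s i = A s i"
| "fprop n W b x l A (Suc d) s i =
     (if zpre n W b x (l + Suc d) i > 0 then
        Bpm b (l + Suc d) s i + (\<Sum>h<n (l + d). Wpm W (l + Suc d) True i h * fprop n W b x l A d s h
                                    + Wpm W (l + Suc d) False i h * fprop n W b x l A d (\<not> s) h)
      else 0)"

fun Jm :: "(nat \<Rightarrow> nat) \<Rightarrow> (nat \<Rightarrow> nat \<Rightarrow> nat \<Rightarrow> real) \<Rightarrow> (nat \<Rightarrow> nat \<Rightarrow> real) \<Rightarrow> (nat \<Rightarrow> real)
    \<Rightarrow> nat \<Rightarrow> nat \<Rightarrow> nat \<Rightarrow> nat \<Rightarrow> real" where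
  "Jm n W b x l 0 j i = (if j = i then 1 else 0)"
| "Jm n W b x l (Suc d) j i =
     (if zpre n W b x (l + Suc d) j > 0 then 1 else 0) * (\<Sum>h<n (l + d). W (l + Suc d) j h * Jm n W b x l d h i)"

definition gam :: "(nat \<Rightarrow> nat) \<Rightarrow> (nat \<Rightarrow> nat \<Rightarrow> nat \<Rightarrow> real) \<Rightarrow> nat \<Rightarrow> nat \<Rightarrow> real" where
  "gam n W l i = (\<Sum>h<n (l - 1). \<bar>W l i h\<bar>)"

text \<open>Stopping-Game chain. States s^{(l)}_{i,r} = S l i r, cemetery = Bot.\<close>
datatype state = S nat nat bool | Bot

definition Pk :: "(nat \<Rightarrow> nat) \<Rightarrow> (nat \<Rightarrow> nat \<Rightarrow> nat \<Rightarrow> real) \<Rightarrow> (nat \<Rightarrow> nat \<Rightarrow> real) \<Rightarrow> (nat \<Rightarrow> real)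
    \<Rightarrow> state \<Rightarrow> state \<Rightarrow> real" where
  "Pk n W b x s s' = (case s of Bot \<Rightarrow> 0
     | S l i r \<Rightarrow> (if l = 0 then 0
         else if zpre n W b x l i > 0 then
           (case s' of Bot \<Rightarrow> 0
              | S l' h r' \<Rightarrow> (if l' = l - 1 \<and> h < n (l - 1)
                               then Wpm W l (sxor r r') i h / gam n W l i else 0))
         else (case s' of Bot \<Rightarrow> 1 | S _ _ _ \<Rightarrow> 0)))"

text \<open>Discount factor of the continuation s \<rightarrow> s' (irrelevant, set to 1, when going to Bot).\<close>
definition disc :: "(nat \<Rightarrow> nat) \<Rightarrow> (nat \<Rightarrow> nat \<Rightarrow> nat \<Rightarrow> real) \<Rightarrow> state \<Rightarrow> state \<Rightarrow> real" where
  "disc n W s s' = (case s' of Bot \<Rightarrow> 1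
     | S _ _ _ \<Rightarrow> (case s of S l i r \<Rightarrow> gam n W l i | Bot \<Rightarrow> 1))"

definition terminal :: "state \<Rightarrow> bool" where
  "terminal s = (case s of Bot \<Rightarrow> True | S l i r \<Rightarrow> l = 0)"

definition States :: "nat \<Rightarrow> (nat \<Rightarrow> nat) \<Rightarrow> state set" where
  "States L n = {S l i r | l i r. l \<le> L \<and> i < n l} \<union> {Bot}"

text \<open>Trajectory prefixes (tau_0,...,tau_t) starting at u; the chain stops at terminal states.\<close>
definition Traj :: "nat \<Rightarrow> (nat \<Rightarrow> nat) \<Rightarrow> state \<Rightarrow> nat \<Rightarrow> state list set" where
  "Traj L n u t = {\<tau>. length \<tau> = Suc t \<and> set \<tau> \<subseteq> States L n \<and> \<tau> ! 0 = u
                      \<and> (\<forall>t'<t. \<not> terminal (\<tau> ! t'))}"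

definition trajProb :: "(nat \<Rightarrow> nat) \<Rightarrow> (nat \<Rightarrow> nat \<Rightarrow> nat \<Rightarrow> real) \<Rightarrow> (nat \<Rightarrow> nat \<Rightarrow> real) \<Rightarrow> (nat \<Rightarrow> real)
    \<Rightarrow> state list \<Rightarrow> real" where
  "trajProb n W b x \<tau> = (\<Prod>t'<length \<tau> - 1. Pk n W b x (\<tau> ! t') (\<tau> ! Suc t'))"

definition trajDisc :: "(nat \<Rightarrow> nat) \<Rightarrow> (nat \<Rightarrow> nat \<Rightarrow> nat \<Rightarrow> real) \<Rightarrow> state list \<Rightarrow> real" where
  "trajDisc n W \<tau> = (\<Prod>t'<length \<tau> - 1. disc n W (\<tau> ! t') (\<tau> ! Suc t'))"

text \<open>Discounted occupation measure Gamma_u(v) = E[sum_t d_t 1{tau_t = v}]\<close>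
definition Gamma :: "nat \<Rightarrow> (nat \<Rightarrow> nat) \<Rightarrow> (nat \<Rightarrow> nat \<Rightarrow> nat \<Rightarrow> real) \<Rightarrow> (nat \<Rightarrow> nat \<Rightarrow> real) \<Rightarrow> (nat \<Rightarrow> real)
    \<Rightarrow> state \<Rightarrow> state \<Rightarrow> real" where
  "Gamma L n W b x u v = (\<Sum>t. \<Sum>\<tau>\<in>Traj L n u t.
       trajProb n W b x \<tau> * trajDisc n W \<tau> * (if \<tau> ! t = v then 1 else 0))"

end

theory Submission
  imports Defs
begin


definition FF where
  "FF L n W b x t u v = (\<Sum>\<tau>\<in>Traj L n u t. trajProb n W b x \<tau> * trajDisc n W \<tau> * (if \<tau> ! t = v then 1 else 0))"

lemma Gamma_FF: "Gamma L n W b x u v = (\<Sum>t. FF L n W b x t u v)"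
  unfolding Gamma_def FF_def by simp

lemma finite_States: "finite (States L n)"
proof -
  have "{S l i r | l i r. l \<le> L \<and> i < n l} \<subseteq> (\<lambda>((l,i),r). S l i r) ` ((SIGMA l:{..L}. {..<n l}) \<times> UNIV)"
    by (auto simp: image_iff)
  moreover have "finite ((\<lambda>((l,i),r). S l i r) ` ((SIGMA l:{..L}. {..<n l}) \<times> UNIV))"
    by (intro finite_imageI finite_cartesian_product finite_SigmaI) auto
  ultimately show ?thesis unfolding States_def by (meson finite_Un finite_insert finite.emptyI finite_subset)
qed

lemma finite_Traj: "finite (Traj L n u t)"
proof -
  have "Traj L n u t \<subseteq> {xs. set xs \<subseteq> States L n \<and> length xs = Suc t}"
    unfolding Traj_def by auto
  thus ?thesis using finite_lists_length_eq[OF finite_States] finite_subset by blast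
qed

lemma Traj0: "Traj L n u 0 = (if u \<in> States L n then {[u]} else {})"
  unfolding Traj_def by (auto simp: length_Suc_conv)

lemma FF0: "FF L n W b x 0 u v = (if u \<in> States L n \<and> u = v then 1 else 0)"
  unfolding FF_def Traj0 by (auto simp: trajProb_def trajDisc_def)

lemma FF_term: "terminal u \<Longrightarrow> FF L n W b x (Suc t) u v = 0"
proof -
  assume "terminal u"
  hence "Traj L n u (Suc t) = {}" unfolding Traj_def by auto
  thus ?thesis unfolding FF_def by simp
qed

lemma Traj_Suc:
  assumes "u \<in> States L n" "\<not> terminal u"
  shows "Traj L n u (Suc t) = (\<lambda>(u',\<tau>'). u # \<tau>') ` (SIGMA u':States L n. Traj L n u' t)"
proof (rule set_eqI, rule iffI)
  fix \<tau> assume "\<tau> \<in> Traj L n u (Suc t)"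
  then obtain \<tau>' where t: "\<tau> = u # \<tau>'" "length \<tau>' = Suc t" "set \<tau>' \<subseteq> States L n"
      "\<forall>t'<Suc t. \<not> terminal (\<tau> ! t')"
    unfolding Traj_def by (cases \<tau>) auto
  have "\<tau>' ! 0 \<in> States L n" using t by (cases \<tau>') auto
  moreover have "\<tau>' \<in> Traj L n (\<tau>' ! 0) t"
    using t unfolding Traj_def by auto
  ultimately show "\<tau> \<in> (\<lambda>(u',\<tau>'). u # \<tau>') ` (SIGMA u':States L n. Traj L n u' t)"
    using t by (auto simp: image_iff)
next
  fix \<tau> assume "\<tau> \<in> (\<lambda>(u',\<tau>'). u # \<tau>') ` (SIGMA u':States L n. Traj L n u' t)"
  then obtain u' \<tau>' where t: "\<tau> = u # \<tau>'" "u' \<in> States L n" "\<tau>' \<in> Traj L n u' t" by auto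
  show "\<tau> \<in> Traj L n u (Suc t)"
    using t assms unfolding Traj_def
    by (auto simp: less_Suc_eq_0_disj)
qed

lemma FF_step:
  assumes "u \<in> States L n" "\<not> terminal u"
  shows "FF L n W b x (Suc t) u v = (\<Sum>u'\<in>States L n. Pk n W b x u u' * disc n W u u' * FF L n W b x t u' v)"
proof -
  have inj: "inj_on (\<lambda>(u',\<tau>'). u # \<tau>') (SIGMA u':States L n. Traj L n u' t)"
    by (auto simp: inj_on_def Traj_def)
  have key: "trajProb n W b x (u # \<tau>') * trajDisc n W (u # \<tau>') * (if (u # \<tau>') ! Suc t = v then 1 else 0)
      = Pk n W b x u u' * disc n W u u' * (trajProb n W b x \<tau>' * trajDisc n W \<tau>' * (if \<tau>' ! t = v then 1 else 0))"
    if "\<tau>' \<in> Traj L n u' t" for u' \<tau>'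
  proof -
    have l: "length \<tau>' = Suc t" "\<tau>' ! 0 = u'" using that unfolding Traj_def by auto
    have "trajProb n W b x (u # \<tau>') = Pk n W b x u u' * trajProb n W b x \<tau>'"
      unfolding trajProb_def using l by (simp del: prod.lessThan_Suc add: prod.lessThan_Suc_shift)
    moreover have "trajDisc n W (u # \<tau>') = disc n W u u' * trajDisc n W \<tau>'"
      unfolding trajDisc_def using l by (simp del: prod.lessThan_Suc add: prod.lessThan_Suc_shift)
    ultimately show ?thesis by simp
  qed
  have "FF L n W b x (Suc t) u v = (\<Sum>(u',\<tau>')\<in>(SIGMA u':States L n. Traj L n u' t).
        trajProb n W b x (u # \<tau>') * trajDisc n W (u # \<tau>') * (if (u # \<tau>') ! Suc t = v then 1 else 0))"
    unfolding FF_def Traj_Suc[OF assms] by (subst sum.reindex[OF inj]) (simp add: case_prod_unfold)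
  also have "\<dots> = (\<Sum>u'\<in>States L n. \<Sum>\<tau>'\<in>Traj L n u' t.
        trajProb n W b x (u # \<tau>') * trajDisc n W (u # \<tau>') * (if (u # \<tau>') ! Suc t = v then 1 else 0))"
    by (subst sum.Sigma) (auto simp: finite_States finite_Traj)
  also have "\<dots> = (\<Sum>u'\<in>States L n. Pk n W b x u u' * disc n W u u' * FF L n W b x t u' v)"
    unfolding FF_def sum_distrib_left
    by (rule sum.cong[OF refl], rule sum.cong[OF refl], rule key)
  finally show ?thesis .
qed

fun lay :: "state \<Rightarrow> nat" where "lay (S l i r) = l" | "lay Bot = 0"

lemma Pk_nz:
  assumes "Pk n W b x (S l i r) u' \<noteq> 0"
  shows "l \<noteq> 0 \<and> (u' = Bot \<or> (\<exists>h r'. u' = S (l - 1) h r'))"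
  using assms unfolding Pk_def by (cases u') (auto split: if_splits)

lemma FF_vanish: "u \<in> States L n \<Longrightarrow> lay u < t \<Longrightarrow> FF L n W b x t u v = 0"
proof (induction t arbitrary: u)
  case 0 then show ?case by simp
next
  case (Suc t)
  show ?case
  proof (cases "terminal u")
    case True then show ?thesis by (rule FF_term)
  next
    case False
    then obtain l i r where u: "u = S l i r" "l \<noteq> 0" unfolding terminal_def by (cases u) auto
    have "(\<Sum>u'\<in>States L n. Pk n W b x u u' * disc n W u u' * FF L n W b x t u' v) = 0"
    proof (rule sum.neutral, rule ballI)
      fix u' assume u': "u' \<in> States L n"
      show "Pk n W b x u u' * disc n W u u' * FF L n W b x t u' v = 0"
      proof (cases "Pk n W b x u u' = 0")
        case False
        hence "u' = Bot \<or> (\<exists>h r'. u' = S (l - 1) h r')" using Pk_nz u by metis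
        hence "lay u' < t" using Suc.prems u by auto
        then show ?thesis using Suc.IH u' by simp
      qed simp
    qed
    then show ?thesis using FF_step[OF Suc.prems(1) False] by simp
  qed
qed

lemma Gamma_fin:
  assumes "u \<in> States L n" "lay u \<le> M"
  shows "Gamma L n W b x u v = (\<Sum>t<Suc M. FF L n W b x t u v)"
  unfolding Gamma_FF
  by (rule suminf_finite) (use assms FF_vanish in auto)

lemma Gamma_step:
  assumes "S m j q \<in> States L n" "1 \<le> m"
  shows "Gamma L n W b x (S m j q) v = (if S m j q = v then 1 else 0)
     + (\<Sum>u'\<in>States L n. Pk n W b x (S m j q) u' * disc n W (S m j q) u' * Gamma L n W b x u' v)"
proof -
  let ?u = "S m j q"
  have nt: "\<not> terminal ?u" using assms by (simp add: terminal_def)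
  have "Gamma L n W b x ?u v = (\<Sum>t<Suc m. FF L n W b x t ?u v)"
    by (rule Gamma_fin) (use assms in auto)
  also have "\<dots> = FF L n W b x 0 ?u v + (\<Sum>t<m. FF L n W b x (Suc t) ?u v)"
    by (simp del: sum.lessThan_Suc add: sum.lessThan_Suc_shift)
  also have "(\<Sum>t<m. FF L n W b x (Suc t) ?u v)
      = (\<Sum>t<m. \<Sum>u'\<in>States L n. Pk n W b x ?u u' * disc n W ?u u' * FF L n W b x t u' v)"
    using FF_step[OF assms(1) nt] by simp
  also have "\<dots> = (\<Sum>u'\<in>States L n. \<Sum>t<m. Pk n W b x ?u u' * disc n W ?u u' * FF L n W b x t u' v)"
    by (rule sum.swap)
  also have "\<dots> = (\<Sum>u'\<in>States L n. Pk n W b x ?u u' * disc n W ?u u' * Gamma L n W b x u' v)"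
  proof (rule sum.cong[OF refl])
    fix u' assume u': "u' \<in> States L n"
    show "(\<Sum>t<m. Pk n W b x ?u u' * disc n W ?u u' * FF L n W b x t u' v)
        = Pk n W b x ?u u' * disc n W ?u u' * Gamma L n W b x u' v"
    proof (cases "Pk n W b x ?u u' = 0")
      case False
      hence "u' = Bot \<or> (\<exists>h r'. u' = S (m - 1) h r')" using Pk_nz by metis
      hence "lay u' \<le> m - 1" by auto
      hence "Gamma L n W b x u' v = (\<Sum>t<Suc (m - 1). FF L n W b x t u' v)"
        by (rule Gamma_fin[OF u'])
      then show ?thesis using assms(2) by (simp add: sum_distrib_left)
    qed simp
  qed
  finally show ?thesis using assms by (simp add: FF0)
qed

lemma Gamma_Bot: "v \<noteq> Bot \<Longrightarrow> Gamma L n W b x Bot v = 0"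
  by (subst Gamma_fin[where M=0]) (auto simp: States_def FF0)

lemma Gamma_rec:
  assumes "m \<le> L" "j < n m" "1 \<le> m" "gam n W m j > 0" "v \<noteq> Bot"
  shows "Gamma L n W b x (S m j q) v = (if S m j q = v then 1 else 0)
     + (if zpre n W b x m j > 0 then (\<Sum>h<n (m - 1). Wpm W m True j h * Gamma L n W b x (S (m - 1) h q) v
            + Wpm W m False j h * Gamma L n W b x (S (m - 1) h (\<not> q)) v) else 0)"
proof -
  let ?u = "S m j q"
  let ?c = "\<lambda>u'. Pk n W b x ?u u' * disc n W ?u u' * Gamma L n W b x u' v"
  have uS: "?u \<in> States L n" using assms by (auto simp: States_def)
  have "(\<Sum>u'\<in>States L n. ?c u') = (if zpre n W b x m j > 0 then (\<Sum>h<n (m - 1). Wpm W m True j h * Gamma L n W b x (S (m - 1) h q) v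
            + Wpm W m False j h * Gamma L n W b x (S (m - 1) h (\<not> q)) v) else 0)"
  proof (cases "zpre n W b x m j > 0")
    case True
    let ?T = "(\<lambda>(h,r'). S (m - 1) h r') ` ({..<n (m - 1)} \<times> UNIV)"
    have TS: "?T \<subseteq> States L n" using assms by (auto simp: States_def)
    have "(\<Sum>u'\<in>States L n. ?c u') = (\<Sum>u'\<in>?T. ?c u')"
    proof (rule sum.mono_neutral_right[OF finite_States TS], rule ballI)
      fix u' assume "u' \<in> States L n - ?T"
      then show "?c u' = 0" using True assms unfolding Pk_def
        by (cases u') (auto simp: image_iff)
    qed
    also have "\<dots> = (\<Sum>(h,r')\<in>{..<n (m - 1)} \<times> UNIV. ?c (S (m - 1) h r'))"
      by (subst sum.reindex) (auto simp: inj_on_def case_prod_unfold)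
    also have "\<dots> = (\<Sum>h<n (m - 1). \<Sum>r'\<in>UNIV. ?c (S (m - 1) h r'))"
      by (subst sum.cartesian_product) simp
    also have "\<dots> = (\<Sum>h<n (m - 1). Wpm W m True j h * Gamma L n W b x (S (m - 1) h q) v
            + Wpm W m False j h * Gamma L n W b x (S (m - 1) h (\<not> q)) v)"
    proof (rule sum.cong[OF refl])
      fix h assume h: "h \<in> {..<n (m - 1)}"
      have c: "?c (S (m - 1) h r') = Wpm W m (sxor q r') j h * Gamma L n W b x (S (m - 1) h r') v" for r'
        using True assms h by (simp add: Pk_def disc_def)
      show "(\<Sum>r'\<in>UNIV. ?c (S (m - 1) h r')) = Wpm W m True j h * Gamma L n W b x (S (m - 1) h q) v
            + Wpm W m False j h * Gamma L n W b x (S (m - 1) h (\<not> q)) v"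
        unfolding c UNIV_bool by (cases q) (auto simp: sxor_def)
    qed
    finally show ?thesis using True by simp
  next
    case False
    have "(\<Sum>u'\<in>States L n. ?c u') = 0"
    proof (rule sum.neutral, rule ballI)
      fix u' show "?c u' = 0" using False assms Gamma_Bot[OF assms(5)] unfolding Pk_def
        by (cases u') auto
    qed
    then show ?thesis using False by simp
  qed
  then show ?thesis using Gamma_step[OF uS assms(3)] by simp
qed

lemma Gamma_low:
  assumes gpos: "\<forall>l'. 1 \<le> l' \<and> l' \<le> L \<longrightarrow> (\<forall>i'<n l'. gam n W l' i' > 0)"
  shows "m < l \<Longrightarrow> m \<le> L \<Longrightarrow> j < n m \<Longrightarrow> Gamma L n W b x (S m j q) (S l i r) = 0"
proof (induction m arbitrary: j q)
  case 0
  then show ?case by (subst Gamma_fin[where M=0]) (auto simp: States_def FF0)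
next
  case (Suc m)
  have g: "gam n W (Suc m) j > 0" using gpos Suc.prems by auto
  show ?case
    using Gamma_rec[OF Suc.prems(2,3) _ g, of "S l i r" b x q] Suc.IH Suc.prems by simp
qed

lemma Gamma_same:
  assumes gpos: "\<forall>l'. 1 \<le> l' \<and> l' \<le> L \<longrightarrow> (\<forall>i'<n l'. gam n W l' i' > 0)"
    and "l \<le> L" "j < n l"
  shows "Gamma L n W b x (S l j q) (S l i r) = (if j = i \<and> q = r then 1 else 0)"
proof (cases l)
  case 0
  then show ?thesis using assms by (subst Gamma_fin[where M=0]) (auto simp: States_def FF0)
next
  case (Suc m)
  have g: "gam n W l j > 0" using gpos assms Suc by auto
  have z: "Gamma L n W b x (S m h q') (S l i r) = 0" if "h < n m" for h q'
    using Gamma_low[OF gpos, of m l h] that assms Suc by simp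
  show ?thesis
    using Gamma_rec[OF assms(2,3) _ g, of "S l i r" b x q] z Suc by simp
qed

lemma deriv_main:
  assumes gpos: "\<forall>l'. 1 \<le> l' \<and> l' \<le> L \<longrightarrow> (\<forall>i'<n l'. gam n W l' i' > 0)"
  shows "l + d \<le> L \<Longrightarrow> j < n (l + d) \<Longrightarrow>
    ((\<lambda>t. fprop n W b x l (\<lambda>s h. if s = k \<and> h = i then t else astop n W b x l s h) d (sxor (sxor r k) q) j)
       has_real_derivative Gamma L n W b x (S (l + d) j q) (S l i r)) (at t0)"
proof (induction d arbitrary: j q)
  case 0
  have e: "(sxor (sxor r k) q = k) = (q = r)" by (auto simp: sxor_def)
  show ?case
  proof (cases "q = r \<and> j = i")
    case True
    hence "(\<lambda>t. fprop n W b x l (\<lambda>s h. if s = k \<and> h = i then t else astop n W b x l s h) 0 (sxor (sxor r k) q) j)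
       = (\<lambda>t. t)" using e by auto
    then show ?thesis using 0 True by (simp add: Gamma_same[OF gpos])
  next
    case False
    hence "(\<lambda>t. fprop n W b x l (\<lambda>s h. if s = k \<and> h = i then t else astop n W b x l s h) 0 (sxor (sxor r k) q) j)
       = (\<lambda>t. astop n W b x l (sxor (sxor r k) q) j)" using e by auto
    moreover have "Gamma L n W b x (S (l + 0) j q) (S l i r) = 0" using 0 False by (auto simp: Gamma_same[OF gpos])
    ultimately show ?thesis by simp
  qed
next
  case (Suc d)
  let ?m = "l + Suc d"
  have g: "gam n W ?m j > 0" using gpos Suc.prems by auto
  have neg: "sxor (sxor r k) (\<not> q) = (\<not> sxor (sxor r k) q)" by (auto simp: sxor_def)
  have R: "Gamma L n W b x (S ?m j q) (S l i r) =
     (if zpre n W b x ?m j > 0 then (\<Sum>h<n (l + d). Wpm W ?m True j h * Gamma L n W b x (S (l + d) h q) (S l i r)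
            + Wpm W ?m False j h * Gamma L n W b x (S (l + d) h (\<not> q)) (S l i r)) else 0)"
    using Gamma_rec[OF Suc.prems _ g, of "S l i r" b x q] by simp
  show ?case
  proof (cases "zpre n W b x ?m j > 0")
    case True
    have D: "((\<lambda>t. Bpm b ?m (sxor (sxor r k) q) j + (\<Sum>h<n (l + d).
        Wpm W ?m True j h * fprop n W b x l (\<lambda>s h. if s = k \<and> h = i then t else astop n W b x l s h) d (sxor (sxor r k) q) h
      + Wpm W ?m False j h * fprop n W b x l (\<lambda>s h. if s = k \<and> h = i then t else astop n W b x l s h) d (sxor (sxor r k) (\<not> q)) h))
      has_real_derivative 0 + (\<Sum>h<n (l + d). Wpm W ?m True j h * Gamma L n W b x (S (l + d) h q) (S l i r)
            + Wpm W ?m False j h * Gamma L n W b x (S (l + d) h (\<not> q)) (S l i r))) (at t0)"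
      using Suc.prems
      by (intro DERIV_add DERIV_const DERIV_sum DERIV_cmult Suc.IH) auto
    show ?thesis using True D R by (simp add: neg)
  next
    case False
    then show ?thesis using R by simp
  qed
qed

lemma J_main:
  assumes gpos: "\<forall>l'. 1 \<le> l' \<and> l' \<le> L \<longrightarrow> (\<forall>i'<n l'. gam n W l' i' > 0)"
  shows "l + d \<le> L \<Longrightarrow> j < n (l + d) \<Longrightarrow>
    Jm n W b x l d j i = xi q True * (Gamma L n W b x (S (l + d) j q) (S l i True) - Gamma L n W b x (S (l + d) j q) (S l i False))"
proof (induction d arbitrary: j q)
  case 0
  then show ?case by (simp add: Gamma_same[OF gpos] xi_def)
next
  case (Suc d)
  let ?m = "l + Suc d"
  have g: "gam n W ?m j > 0" using gpos Suc.prems by auto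
  have R: "Gamma L n W b x (S ?m j q) (S l i r) =
     (if zpre n W b x ?m j > 0 then (\<Sum>h<n (l + d). Wpm W ?m True j h * Gamma L n W b x (S (l + d) h q) (S l i r)
            + Wpm W ?m False j h * Gamma L n W b x (S (l + d) h (\<not> q)) (S l i r)) else 0)" for r
    using Gamma_rec[OF Suc.prems _ g, of "S l i r" b x q] by simp
  have xx: "xi q True * xi q True = 1" "xi (\<not> q) True = - xi q True" by (auto simp: xi_def)
  have W: "Wpm W ?m True j h - Wpm W ?m False j h = W ?m j h" for h
    by (simp add: Wpm_def posp_def negp_def)
  have IH: "Gamma L n W b x (S (l + d) h q') (S l i True) - Gamma L n W b x (S (l + d) h q') (S l i False)
      = xi q' True * Jm n W b x l d h i" if "h < n (l + d)" for h q'
  proof -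
    have "Jm n W b x l d h i = xi q' True * (Gamma L n W b x (S (l + d) h q') (S l i True) - Gamma L n W b x (S (l + d) h q') (S l i False))"
      using Suc.IH[of h q'] Suc.prems that by simp
    moreover have "xi q' True * xi q' True = 1" by (auto simp: xi_def)
    ultimately show ?thesis by (metis mult.assoc mult_1)
  qed
  show ?case
  proof (cases "zpre n W b x ?m j > 0")
    case True
    have "xi q True * (Gamma L n W b x (S ?m j q) (S l i True) - Gamma L n W b x (S ?m j q) (S l i False))
      = xi q True * (\<Sum>h<n (l + d). Wpm W ?m True j h * (Gamma L n W b x (S (l + d) h q) (S l i True) - Gamma L n W b x (S (l + d) h q) (S l i False))
            + Wpm W ?m False j h * (Gamma L n W b x (S (l + d) h (\<not> q)) (S l i True) - Gamma L n W b x (S (l + d) h (\<not> q)) (S l i False)))"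
      unfolding R using True by (simp add: sum_subtractf[symmetric] algebra_simps)
    also have "\<dots> = xi q True * (\<Sum>h<n (l + d). Wpm W ?m True j h * (xi q True * Jm n W b x l d h i)
            + Wpm W ?m False j h * (- xi q True * Jm n W b x l d h i))"
      by (intro arg_cong[where f="\<lambda>z. xi q True * z"] sum.cong refl) (simp add: IH xx)
    also have "\<dots> = (\<Sum>h<n (l + d). (xi q True * xi q True) * ((Wpm W ?m True j h - Wpm W ?m False j h) * Jm n W b x l d h i))"
      by (simp add: sum_distrib_left algebra_simps)
    also have "\<dots> = (\<Sum>h<n (l + d). W ?m j h * Jm n W b x l d h i)"
      by (simp add: xx W[simplified])
    finally show ?thesis using True by simp
  next
    case False
    then show ?thesis using R by simp
  qed
qed



theorem mainTheorem6:
  fixes L :: nat and n :: "nat \<Rightarrow> nat" and W :: "nat \<Rightarrow> nat \<Rightarrow> nat \<Rightarrow> real"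
    and b :: "nat \<Rightarrow> nat \<Rightarrow> real" and x :: "nat \<Rightarrow> real"
    and m j l i :: nat and q p k :: bool
  assumes gpos: "\<forall>l'. 1 \<le> l' \<and> l' \<le> L \<longrightarrow> (\<forall>i'<n l'. gam n W l' i' > 0)"
    and "1 \<le> m" and "m \<le> L" and "j < n m"
    and "l \<le> m" and "i < n l"
  shows "((\<lambda>t. fprop n W b x l (\<lambda>s h. if s = k \<and> h = i then t else astop n W b x l s h)
                  (m - l) (sxor p q) j)
            has_real_derivative Gamma L n W b x (S m j q) (S l i (sxor p k)))
           (at (astop n W b x l k i))
       \<and> Jm n W b x l (m - l) j i
           = xi q True * (Gamma L n W b x (S m j q) (S l i True) - Gamma L n W b x (S m j q) (S l i False))"
proof -
  have lm: "l + (m - l) = m" using assms by simp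
  have lL: "l + (m - l) \<le> L" "j < n (l + (m - l))" using assms by auto
  have e: "sxor (sxor (sxor p k) k) q = sxor p q" by (auto simp: sxor_def)
  show ?thesis
    using deriv_main[OF gpos lL, of b x k i "sxor p k" q "astop n W b x l k i"]
      J_main[OF gpos lL, of b x i q]
    by (simp only: e lm)
qed

end
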